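(* Let $K$ be a compact metric space, $f:K\to\mathbb{R}$ a function and $\alpha$ a countable ordinal. Then $v_\alpha(f)\le\mathrm{osc}_\alpha f\le v_\alpha(f)+v_\alpha(-f)$ pointwise on $K$.
   Context: For $g:K\to[-\infty,\infty]$, $Ug(x)=\limsup_{y\to x}g(y)=\inf_U\sup g(U)$ over open neighborhoods $U$ of $x$ (non-exclusive limsup). Transfinite oscillations: $\mathrm{osc}_0f\equiv0$; for $\beta=\alpha+1$, $\widetilde{\mathrm{osc}}_\beta f(x)=\limsup_{y\to x}(|f(y)-f(x)|+\mathrm{osc}_\alpha f(y))$; for limit $\beta$, $\widetilde{\mathrm{osc}}_\beta f=\sup_{\alpha<\beta}\mathrm{osc}_\alpha f$; $\mathrm{osc}_\beta f=U\widetilde{\mathrm{osc}}_\beta f$. Positive transfinite oscillations $v_\alpha(f)$ are defined identically but without absolute values: $v_0(f)\equiv0$; $\widetilde v_{\alpha+1}(f)(x)=\limsup_{y\to x}(f(y)-f(x)+v_\alpha(f)(y))$; $\widetilde v_\beta(f)=\sup_{\alpha<\beta}v_\alpha(f)$ for limit $\beta$; $v_\beta(f)=U\widetilde v_\beta(f)$. *)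

theory Defs
  imports "HOL-Analysis.Analysis"
begin

text \<open>Upper envelope / non-exclusive limsup:
  Uenv g x = inf over open neighbourhoods U of x of sup g(U).\<close>
definition Uenv :: "('k::topological_space \<Rightarrow> ereal) \<Rightarrow> 'k \<Rightarrow> ereal" where
  "Uenv g x = (INF U \<in> {U. open U \<and> x \<in> U}. SUP y \<in> U. g y)"

text \<open>Generic transfinite oscillation, indexed by elements of a well-ordered type
  (ordinals = initial segments), with increment d x y (value at y relative to x).
  Index with no predecessors: 0; successor of a: U of x |-> limsup_{y->x} (d x y + osc_a y);
  limit: U of sup over smaller indices.\<close>
definition trans_osc ::
  "('k::topological_space \<Rightarrow> 'k \<Rightarrow> ereal) \<Rightarrow> 'a::wellorder \<Rightarrow> 'k \<Rightarrow> ereal" where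
  "trans_osc d = wfrec {(a, b). a < b}
     (\<lambda>r \<beta>. if (\<forall>\<gamma>. \<not> \<gamma> < \<beta>) then (\<lambda>x. 0)
       else if (\<exists>\<alpha>. \<alpha> < \<beta> \<and> (\<forall>\<gamma>. \<not> (\<alpha> < \<gamma> \<and> \<gamma> < \<beta>)))
       then (let \<alpha> = (SOME \<alpha>. \<alpha> < \<beta> \<and> (\<forall>\<gamma>. \<not> (\<alpha> < \<gamma> \<and> \<gamma> < \<beta>)))
             in Uenv (\<lambda>x. Uenv (\<lambda>y. d x y + r \<alpha> y) x))
       else Uenv (\<lambda>x. SUP \<alpha> \<in> {\<alpha>. \<alpha> < \<beta>}. r \<alpha> x))"

definition osc :: "('k::topological_space \<Rightarrow> real) \<Rightarrow> 'a::wellorder \<Rightarrow> 'k \<Rightarrow> ereal" where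
  "osc f = trans_osc (\<lambda>x y. ereal \<bar>f y - f x\<bar>)"

definition posc :: "('k::topological_space \<Rightarrow> real) \<Rightarrow> 'a::wellorder \<Rightarrow> 'k \<Rightarrow> ereal" where
  "posc f = trans_osc (\<lambda>x y. ereal (f y - f x))"

end

theory Submission
  imports Defs
begin

lemma Uenv_ge: "g x \<le> Uenv g x"
  unfolding Uenv_def by (rule INF_greatest) (auto intro: SUP_upper)

lemma Uenv_mono: "(\<And>y. g y \<le> h y) \<Longrightarrow> Uenv g x \<le> Uenv h x"
  unfolding Uenv_def by (intro INF_mono) (auto intro!: SUP_mono)

lemma Uenv_lessD: "Uenv g x < c \<Longrightarrow> \<exists>V. open V \<and> x \<in> V \<and> (\<forall>y\<in>V. g y < c)"
  unfolding Uenv_def by (auto simp: INF_less_iff intro: le_less_trans SUP_upper)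

lemma Uenv_leI: "open V \<Longrightarrow> x \<in> V \<Longrightarrow> (\<And>y. y \<in> V \<Longrightarrow> g y \<le> c) \<Longrightarrow> Uenv g x \<le> c"
  unfolding Uenv_def by (rule INF_lower2[of V]) (auto intro: SUP_least)

lemma Uenv_idem: "Uenv (Uenv g) x = Uenv g x"
proof (rule antisym)
  show "Uenv (Uenv g) x \<le> Uenv g x"
  proof (rule dense_ge)
    fix c assume "Uenv g x < c"
    then obtain V where V: "open V" "x \<in> V" "\<forall>y\<in>V. g y < c" using Uenv_lessD by blast
    have "Uenv g y \<le> c" if "y \<in> V" for y
      using V that by (intro Uenv_leI[of V]) (auto intro: less_imp_le)
    then show "Uenv (Uenv g) x \<le> c" using V by (intro Uenv_leI[of V]) auto
  qed
qed (rule Uenv_ge)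

lemma Uenv_const: "Uenv (\<lambda>y. c) x = c"
  by (metis Uenv_ge Uenv_leI open_UNIV UNIV_I antisym order_refl)

lemma Uenv_max: "Uenv (\<lambda>y. max (g y) (h y)) x \<le> max (Uenv g x) (Uenv h x)"
proof (rule dense_ge)
  fix c assume "max (Uenv g x) (Uenv h x) < c"
  then have "Uenv g x < c" "Uenv h x < c" by auto
  then obtain V1 V2 where "open V1" "x \<in> V1" "\<forall>y\<in>V1. g y < c"
     "open V2" "x \<in> V2" "\<forall>y\<in>V2. h y < c" using Uenv_lessD by metis
  then show "Uenv (\<lambda>y. max (g y) (h y)) x \<le> c"
    by (intro Uenv_leI[of "V1 \<inter> V2"]) (auto intro: less_imp_le)
qed

lemma Uenv_add:
  assumes "0 \<le> g x" "0 \<le> h x"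
  shows "Uenv (\<lambda>y. g y + h y) x \<le> Uenv g x + Uenv h x"
proof -
  let ?I = "{U. open U \<and> x \<in> U}"
  have "Uenv (\<lambda>y. g y + h y) x \<le> (INF U\<in>?I. (SUP y\<in>U. g y) + (SUP y\<in>U. h y))"
    unfolding Uenv_def
    by (intro INF_mono) (auto intro!: SUP_least add_mono SUP_upper)
  also have "\<dots> = Uenv g x + Uenv h x"
    unfolding Uenv_def
  proof (rule INF_ereal_add_directed)
    fix i assume "i \<in> ?I"
    then show "0 \<le> (SUP y\<in>i. g y)" "0 \<le> (SUP y\<in>i. h y)"
      using assms by (auto intro: SUP_upper2)
  next
    fix i j assume "i \<in> ?I" "j \<in> ?I"
    then show "\<exists>k\<in>?I. (SUP y\<in>k. g y) + (SUP y\<in>k. h y) \<le> (SUP y\<in>i. g y) + (SUP y\<in>j. h y)"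
      by (intro bexI[of _ "i \<inter> j"]) (auto intro!: add_mono SUP_subset_mono)
  qed
  finally show ?thesis .
qed

definition predof :: "'a::wellorder \<Rightarrow> 'a" where
  "predof \<beta> = (SOME \<alpha>. \<alpha> < \<beta> \<and> (\<forall>\<gamma>. \<not> (\<alpha> < \<gamma> \<and> \<gamma> < \<beta>)))"

lemma trans_osc_eq:
  fixes d :: "'k::topological_space \<Rightarrow> 'k \<Rightarrow> ereal" and \<beta> :: "'a::wellorder"
  shows "trans_osc d \<beta> = (if (\<forall>\<gamma>. \<not> \<gamma> < \<beta>) then (\<lambda>x. 0)
       else if (\<exists>\<alpha>. \<alpha> < \<beta> \<and> (\<forall>\<gamma>. \<not> (\<alpha> < \<gamma> \<and> \<gamma> < \<beta>)))
       then Uenv (\<lambda>x. Uenv (\<lambda>y. d x y + trans_osc d (predof \<beta>) y) x)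
       else Uenv (\<lambda>x. SUP \<alpha> \<in> {\<alpha>. \<alpha> < \<beta>}. trans_osc d \<alpha> x))"
proof -
  let ?H = "(\<lambda>(r :: 'a \<Rightarrow> 'k \<Rightarrow> ereal) (\<beta>::'a). if (\<forall>\<gamma>. \<not> \<gamma> < \<beta>) then (\<lambda>x. 0)
       else if (\<exists>\<alpha>. \<alpha> < \<beta> \<and> (\<forall>\<gamma>. \<not> (\<alpha> < \<gamma> \<and> \<gamma> < \<beta>)))
       then (let \<alpha> = (SOME \<alpha>. \<alpha> < \<beta> \<and> (\<forall>\<gamma>. \<not> (\<alpha> < \<gamma> \<and> \<gamma> < \<beta>)))
             in Uenv (\<lambda>x. Uenv (\<lambda>y. d x y + r \<alpha> y) x))
       else Uenv (\<lambda>x. SUP \<alpha> \<in> {\<alpha>. \<alpha> < \<beta>}. r \<alpha> x))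
       "
  have adm: "adm_wf {(a::'a, b). a < b} ?H"
    unfolding adm_wf_def
  proof (intro allI impI)
    fix r s :: "'a \<Rightarrow> 'k \<Rightarrow> ereal" and \<beta> :: 'a
    assume h: "\<forall>z. (z, \<beta>) \<in> {(a, b). a < b} \<longrightarrow> r z = s z"
    show "?H r \<beta> = ?H s \<beta>"
    proof (cases "\<exists>\<alpha>. \<alpha> < \<beta> \<and> (\<forall>\<gamma>. \<not> (\<alpha> < \<gamma> \<and> \<gamma> < \<beta>))")
      case True
      then have "(SOME \<alpha>. \<alpha> < \<beta> \<and> (\<forall>\<gamma>. \<not> (\<alpha> < \<gamma> \<and> \<gamma> < \<beta>))) < \<beta>"
        by (rule conjunct1[OF someI_ex])
      moreover have c: "(\<exists>\<alpha>. \<alpha> < \<beta> \<and> (\<forall>\<gamma>. \<not> (\<alpha> < \<gamma> \<and> \<gamma> < \<beta>))) = True" using True by simp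
      ultimately show ?thesis using h by (simp only: c Let_def if_True) simp
    next
      case False
      have "(\<lambda>x. SUP \<alpha> \<in> {\<alpha>. \<alpha> < \<beta>}. r \<alpha> x) = (\<lambda>x. SUP \<alpha> \<in> {\<alpha>. \<alpha> < \<beta>}. s \<alpha> x)"
        using h by (intro ext SUP_cong) auto
      moreover have c: "(\<exists>\<alpha>. \<alpha> < \<beta> \<and> (\<forall>\<gamma>. \<not> (\<alpha> < \<gamma> \<and> \<gamma> < \<beta>))) = False" using False by simp
      ultimately show ?thesis by (simp only: c if_False)
    qed
  qed
  have "trans_osc d = ?H (trans_osc d)"
    unfolding trans_osc_def by (rule wfrec_fixpoint[OF wf adm])
  then have "trans_osc d \<beta> = ?H (trans_osc d) \<beta>" by (rule fun_cong)
  then show ?thesis unfolding predof_def Let_def .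
qed

lemma trans_osc_zero: "(\<forall>\<gamma>. \<not> \<gamma> < \<beta>) \<Longrightarrow> trans_osc d \<beta> = (\<lambda>x. 0)"
  by (subst trans_osc_eq) simp

lemma trans_osc_succ: "\<alpha> < \<beta> \<Longrightarrow> (\<forall>\<gamma>. \<not> (\<alpha> < \<gamma> \<and> \<gamma> < \<beta>)) \<Longrightarrow>
   trans_osc d \<beta> = Uenv (\<lambda>x. Uenv (\<lambda>y. d x y + trans_osc d (predof \<beta>) y) x)"
  by (subst trans_osc_eq) auto

lemma trans_osc_lim: "\<alpha> < \<beta> \<Longrightarrow> \<not> (\<exists>\<alpha>. \<alpha> < \<beta> \<and> (\<forall>\<gamma>. \<not> (\<alpha> < \<gamma> \<and> \<gamma> < \<beta>))) \<Longrightarrow>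
   trans_osc d \<beta> = Uenv (\<lambda>x. SUP \<alpha> \<in> {\<alpha>. \<alpha> < \<beta>}. trans_osc d \<alpha> x)"
  by (subst trans_osc_eq) auto

lemma predof_less: "\<alpha> < \<beta> \<Longrightarrow> (\<forall>\<gamma>. \<not> (\<alpha> < \<gamma> \<and> \<gamma> < \<beta>)) \<Longrightarrow> predof \<beta> < \<beta>"
  unfolding predof_def by (rule conjunct1[OF someI_ex]) blast

lemma trans_osc_cases:
  fixes \<beta> :: "'a::wellorder"
  obtains "\<forall>\<gamma>. \<not> \<gamma> < \<beta>"
  | \<alpha> where "\<alpha> < \<beta>" "\<forall>\<gamma>. \<not> (\<alpha> < \<gamma> \<and> \<gamma> < \<beta>)"
  | \<alpha> where "\<alpha> < \<beta>" "\<not> (\<exists>\<alpha>. \<alpha> < \<beta> \<and> (\<forall>\<gamma>. \<not> (\<alpha> < \<gamma> \<and> \<gamma> < \<beta>)))"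
  by blast

lemma trans_osc_U: "Uenv (trans_osc d \<beta>) x = trans_osc d \<beta> x"
proof (cases \<beta> rule: trans_osc_cases)
  case 1 then show ?thesis by (simp add: trans_osc_zero Uenv_const)
next
  case (2 \<alpha>) then show ?thesis by (simp add: trans_osc_succ[OF 2] Uenv_idem)
next
  case (3 \<alpha>) then show ?thesis by (simp add: trans_osc_lim[OF 3] Uenv_idem)
qed

lemma trans_osc_nonneg:
  assumes d0: "\<And>x. d x x = 0"
  shows "0 \<le> trans_osc d \<beta> x"
proof (induction \<beta> arbitrary: x rule: less_induct)
  case (less \<beta>)
  show ?case
  proof (cases \<beta> rule: trans_osc_cases)
    case 1 then show ?thesis by (simp add: trans_osc_zero)
  next
    case (2 \<alpha>)
    have "0 \<le> trans_osc d (predof \<beta>) x" using less predof_less[OF 2] by blast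
    also have "\<dots> = d x x + trans_osc d (predof \<beta>) x" by (simp add: d0)
    also have "\<dots> \<le> Uenv (\<lambda>y. d x y + trans_osc d (predof \<beta>) y) x" by (rule Uenv_ge)
    also have "\<dots> \<le> trans_osc d \<beta> x" unfolding trans_osc_succ[OF 2] by (rule Uenv_ge)
    finally show ?thesis .
  next
    case (3 \<alpha>)
    have "0 \<le> trans_osc d \<alpha> x" using less 3 by blast
    also have "\<dots> \<le> (SUP \<alpha> \<in> {\<alpha>. \<alpha> < \<beta>}. trans_osc d \<alpha> x)" using 3 by (intro SUP_upper) auto
    also have "\<dots> \<le> trans_osc d \<beta> x" unfolding trans_osc_lim[OF 3] by (rule Uenv_ge)
    finally show ?thesis .
  qed
qed

lemma trans_osc_mono:
  assumes dle: "\<And>x y. d1 x y \<le> d2 x y"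
  shows "trans_osc d1 \<beta> x \<le> trans_osc d2 \<beta> x"
proof (induction \<beta> arbitrary: x rule: less_induct)
  case (less \<beta>)
  show ?case
  proof (cases \<beta> rule: trans_osc_cases)
    case 1 then show ?thesis by (simp add: trans_osc_zero)
  next
    case (2 \<alpha>)
    have "trans_osc d1 (predof \<beta>) y \<le> trans_osc d2 (predof \<beta>) y" for y
      using less predof_less[OF 2] by blast
    then show ?thesis unfolding trans_osc_succ[OF 2]
      by (intro Uenv_mono add_mono dle)
  next
    case (3 \<alpha>)
    have "trans_osc d1 a y \<le> trans_osc d2 a y" if "a < \<beta>" for y a
      using less that by blast
    then show ?thesis unfolding trans_osc_lim[OF 3]
      by (intro Uenv_mono SUP_mono) auto
  qed
qed

lemma osc_le_sum:
  fixes f :: "'k::topological_space \<Rightarrow> real" and \<beta> :: "'a::wellorder"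
  shows "osc f \<beta> x \<le> posc f \<beta> x + posc (\<lambda>y. - f y) \<beta> x"
proof (induction \<beta> arbitrary: x rule: less_induct)
  case (less \<beta>)
  define d1 where "d1 = (\<lambda>x y. ereal \<bar>f y - f x\<bar>)"
  define d2 where "d2 = (\<lambda>x y. ereal (f y - f x))"
  define d3 where "d3 = (\<lambda>x y. ereal (- f y - - f x))"
  have oeq: "(osc f :: 'a \<Rightarrow> _) = trans_osc d1" "(posc f :: 'a \<Rightarrow> _) = trans_osc d2" "(posc (\<lambda>y. - f y) :: 'a \<Rightarrow> _) = trans_osc d3"
    unfolding osc_def posc_def d1_def d2_def d3_def by auto
  have nn2: "0 \<le> trans_osc d2 a y" for a :: 'a and y
    by (rule trans_osc_nonneg) (simp add: d2_def)
  have nn3: "0 \<le> trans_osc d3 a y" for a :: 'a and y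
    by (rule trans_osc_nonneg) (simp add: d3_def)
  have IH: "trans_osc d1 a y \<le> trans_osc d2 a y + trans_osc d3 a y" if "a < \<beta>" for a y
    using less[OF that] unfolding oeq .
  have "trans_osc d1 \<beta> x \<le> trans_osc d2 \<beta> x + trans_osc d3 \<beta> x"
  proof (cases \<beta> rule: trans_osc_cases)
    case 1 then show ?thesis by (simp add: trans_osc_zero)
  next
    case (2 \<alpha>)
    define p where "p = predof \<beta>"
    have pb: "p < \<beta>" unfolding p_def by (rule predof_less[OF 2])
    define ro where "ro = trans_osc d1 p"
    define vf where "vf = trans_osc d2 p"
    define vg where "vg = trans_osc d3 p"
    define A where "A = (\<lambda>x. Uenv (\<lambda>y. d2 x y + vf y) x)"
    define B where "B = (\<lambda>x. Uenv (\<lambda>y. d3 x y + vg y) x)"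
    have vfA: "vf x \<le> A x" for x
      using Uenv_ge[of "\<lambda>y. d2 x y + vf y" x] unfolding A_def by (simp add: d2_def)
    have vgB: "vg x \<le> B x" for x
      using Uenv_ge[of "\<lambda>y. d3 x y + vg y" x] unfolding B_def by (simp add: d3_def)
    have vf0: "0 \<le> vf x" for x unfolding vf_def by (rule nn2)
    have vg0: "0 \<le> vg x" for x unfolding vg_def by (rule nn3)
    have inner: "Uenv (\<lambda>y. d1 x y + ro y) x \<le> A x + B x" for x
    proof -
      have pw: "d1 x y + ro y \<le> max ((d2 x y + vf y) + vg y) (vf y + (d3 x y + vg y))" for y
      proof -
        have "d1 x y + ro y \<le> d1 x y + (vf y + vg y)"
          using IH[OF pb, of y] unfolding ro_def vf_def vg_def by (rule add_left_mono)
        also have "\<dots> \<le> max ((d2 x y + vf y) + vg y) (vf y + (d3 x y + vg y))"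
        proof (cases "f x \<le> f y")
          case True
          then have "d1 x y = d2 x y" unfolding d1_def d2_def by simp
          then show ?thesis by (simp add: add.assoc)
        next
          case False
          then have "d1 x y = d3 x y" unfolding d1_def d3_def by simp
          then show ?thesis by (simp add: ac_simps)
        qed
        finally show ?thesis .
      qed
      have "Uenv (\<lambda>y. d1 x y + ro y) x
          \<le> Uenv (\<lambda>y. max ((d2 x y + vf y) + vg y) (vf y + (d3 x y + vg y))) x"
        by (rule Uenv_mono[OF pw])
      also have "\<dots> \<le> max (Uenv (\<lambda>y. (d2 x y + vf y) + vg y) x) (Uenv (\<lambda>y. vf y + (d3 x y + vg y)) x)"
        by (rule Uenv_max)
      also have "\<dots> \<le> A x + B x"
      proof (rule max.boundedI)
        have "Uenv (\<lambda>y. (d2 x y + vf y) + vg y) x \<le> A x + Uenv vg x"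
          unfolding A_def by (rule Uenv_add) (simp_all add: d2_def vf0 vg0)
        also have "Uenv vg x = vg x" unfolding vg_def by (rule trans_osc_U)
        also have "A x + vg x \<le> A x + B x" by (rule add_left_mono[OF vgB])
        finally show "Uenv (\<lambda>y. (d2 x y + vf y) + vg y) x \<le> A x + B x" .
      next
        have "Uenv (\<lambda>y. vf y + (d3 x y + vg y)) x \<le> Uenv vf x + B x"
          unfolding B_def by (rule Uenv_add) (simp_all add: d3_def vf0 vg0)
        also have "Uenv vf x = vf x" unfolding vf_def by (rule trans_osc_U)
        also have "vf x + B x \<le> A x + B x" by (rule add_right_mono[OF vfA])
        finally show "Uenv (\<lambda>y. vf y + (d3 x y + vg y)) x \<le> A x + B x" .
      qed
      finally show ?thesis .
    qed
    have "trans_osc d1 \<beta> x = Uenv (\<lambda>x. Uenv (\<lambda>y. d1 x y + ro y) x) x"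
      unfolding trans_osc_succ[OF 2] ro_def p_def ..
    also have "\<dots> \<le> Uenv (\<lambda>x. A x + B x) x" by (rule Uenv_mono[OF inner])
    also have "\<dots> \<le> Uenv A x + Uenv B x"
      by (rule Uenv_add) (auto intro: order_trans[OF vf0 vfA] order_trans[OF vg0 vgB])
    also have "\<dots> = trans_osc d2 \<beta> x + trans_osc d3 \<beta> x"
      unfolding trans_osc_succ[OF 2] A_def B_def vf_def vg_def p_def ..
    finally show ?thesis .
  next
    case (3 \<alpha>)
    have "trans_osc d1 \<beta> x = Uenv (\<lambda>x. SUP a \<in> {a. a < \<beta>}. trans_osc d1 a x) x"
      unfolding trans_osc_lim[OF 3] ..
    also have "\<dots> \<le> Uenv (\<lambda>x. (SUP a \<in> {a. a < \<beta>}. trans_osc d2 a x) + (SUP a \<in> {a. a < \<beta>}. trans_osc d3 a x)) x"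
      by (intro Uenv_mono SUP_least order_trans[OF IH] add_mono SUP_upper) auto
    also have "\<dots> \<le> Uenv (\<lambda>x. SUP a \<in> {a. a < \<beta>}. trans_osc d2 a x) x + Uenv (\<lambda>x. SUP a \<in> {a. a < \<beta>}. trans_osc d3 a x) x"
      using 3 by (intro Uenv_add SUP_upper2[of \<alpha>] nn2 nn3) auto
    also have "\<dots> = trans_osc d2 \<beta> x + trans_osc d3 \<beta> x"
      unfolding trans_osc_lim[OF 3] ..
    finally show ?thesis .
  qed
  then show ?case unfolding oeq .
qed

theorem proposition3p2:
  fixes f :: "'k::metric_space \<Rightarrow> real" and \<alpha> :: "'a::wellorder"
  assumes "compact (UNIV :: 'k set)"
    and "countable {..<\<alpha>}"
  shows "\<forall>x. posc f \<alpha> x \<le> osc f \<alpha> x \<and>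
             osc f \<alpha> x \<le> posc f \<alpha> x + posc (\<lambda>y. - f y) \<alpha> x"
proof
  fix x
  show "posc f \<alpha> x \<le> osc f \<alpha> x \<and> osc f \<alpha> x \<le> posc f \<alpha> x + posc (\<lambda>y. - f y) \<alpha> x"
  proof
    show "posc f \<alpha> x \<le> osc f \<alpha> x"
      unfolding posc_def osc_def by (rule trans_osc_mono) simp
    show "osc f \<alpha> x \<le> posc f \<alpha> x + posc (\<lambda>y. - f y) \<alpha> x"
      by (rule osc_le_sum)
  qed
qed

end
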